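(* Let $\mu$ be a continuous capacity on $(\Omega,\mathcal{F})$ and $\mathbf{Y}=\{Y_n\}_{n\in\mathbb{N}}$ a real-valued stochastic process on $(\Omega,\mathcal{F})$. Then $\mathbf{Y}$ is stationary on $(\Omega,\mathcal{F},\mu)$ if and only if $\mu_{\mathbf{Y}}$ is $\tau$-invariant, where $\tau$ is the shift on $\mathbb{R}^{\mathbb{N}}$.
   Context: A capacity is $\mu:\mathcal{F}\to[0,1]$ with $\mu(\emptyset)=0$, $\mu(\Omega)=1$, monotone; continuous if $\mu(A_n)\to\mu(A)$ whenever $A_n\uparrow A$ or $A_n\downarrow A$. $\mathbf{Y}$ is stationary if for all $n\in\mathbb{N}$, $k\in\mathbb{N}_0$ and Borel $A\subseteq\mathbb{R}^{k+1}$, $\mu(\{(Y_n,\dots,Y_{n+k})\in A\})=\mu(\{(Y_{n+1},\dots,Y_{n+1+k})\in A\})$. $\mathbb{R}^{\mathbb{N}}$ carries the $\sigma$-algebra $\sigma(\mathcal{C})$ generated by cylinders $\{\mathbf{x}:(x_1,\dots,x_n)\in H\}$, $n\in\mathbb{N}$, $H\in\mathcal{B}(\mathbb{R}^n)$; $\tau(x_1,x_2,x_3,\dots)=(x_2,x_3,\dots)$; $\mu_{\mathbf{Y}}(C)=\mu(\{\omega:(Y_1(\omega),Y_2(\omega),\dots)\in C\})$ for $C\in\sigma(\mathcal{C})$; $\tau$-invariance means $\mu_{\mathbf{Y}}(\tau^{-1}C)=\mu_{\mathbf{Y}}(C)$ for all $C\in\sigma(\mathcal{C})$. *)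

theory Defs
  imports "HOL-Probability.Probability"
begin

text \<open>The measurable space (Omega, F) is represented by a measure M with
  Omega = space M and F = sets M; only its sigma-algebra is used.
  A capacity is a set function mu on F with values in [0,1].\<close>

definition capacity :: "'a measure \<Rightarrow> ('a set \<Rightarrow> real) \<Rightarrow> bool" where
  "capacity M \<mu> \<longleftrightarrow>
     (\<forall>A\<in>sets M. 0 \<le> \<mu> A \<and> \<mu> A \<le> 1) \<and>
     \<mu> {} = 0 \<and> \<mu> (space M) = 1 \<and>
     (\<forall>A\<in>sets M. \<forall>B\<in>sets M. A \<subseteq> B \<longrightarrow> \<mu> A \<le> \<mu> B)"

definition continuous_capacity :: "'a measure \<Rightarrow> ('a set \<Rightarrow> real) \<Rightarrow> bool" where
  "continuous_capacity M \<mu> \<longleftrightarrow> capacity M \<mu> \<and>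
     (\<forall>A :: nat \<Rightarrow> 'a set. range A \<subseteq> sets M \<longrightarrow> incseq A \<longrightarrow>
         (\<lambda>n. \<mu> (A n)) \<longlonglongrightarrow> \<mu> (\<Union>n. A n)) \<and>
     (\<forall>A :: nat \<Rightarrow> 'a set. range A \<subseteq> sets M \<longrightarrow> decseq A \<longrightarrow>
         (\<lambda>n. \<mu> (A n)) \<longlonglongrightarrow> \<mu> (\<Inter>n. A n))"

text \<open>A real-valued stochastic process: Y n is F-measurable for every n.
  Indices are shifted to start at 0 (Y 0 plays the role of Y_1).\<close>

definition real_process :: "'a measure \<Rightarrow> (nat \<Rightarrow> 'a \<Rightarrow> real) \<Rightarrow> bool" where
  "real_process M Y \<longleftrightarrow> (\<forall>n. Y n \<in> borel_measurable M)"

text \<open>Stationarity: the finite-dimensional block (Y_n,...,Y_{n+k}), viewed as an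
  element of R^{k+1} = ({0..k} -> R) with its Borel (= product) sigma-algebra, has
  the same capacity-law as its one-step shift.\<close>

definition stationary :: "'a measure \<Rightarrow> ('a set \<Rightarrow> real) \<Rightarrow> (nat \<Rightarrow> 'a \<Rightarrow> real) \<Rightarrow> bool" where
  "stationary M \<mu> Y \<longleftrightarrow>
     (\<forall>n k. \<forall>A \<in> sets (PiM {..k} (\<lambda>_. borel)).
        \<mu> {\<omega> \<in> space M. (\<lambda>i\<in>{..k}. Y (n + i) \<omega>) \<in> A} =
        \<mu> {\<omega> \<in> space M. (\<lambda>i\<in>{..k}. Y (n + 1 + i) \<omega>) \<in> A})"

abbreviation seq_space :: "(nat \<Rightarrow> real) measure" where
  "seq_space \<equiv> PiM UNIV (\<lambda>_::nat. borel)"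

definition shift :: "(nat \<Rightarrow> real) \<Rightarrow> (nat \<Rightarrow> real)" where
  "shift x = (\<lambda>i. x (Suc i))"

definition law_cap :: "'a measure \<Rightarrow> ('a set \<Rightarrow> real) \<Rightarrow> (nat \<Rightarrow> 'a \<Rightarrow> real)
    \<Rightarrow> (nat \<Rightarrow> real) set \<Rightarrow> real" where
  "law_cap M \<mu> Y C = \<mu> {\<omega> \<in> space M. (\<lambda>i. Y i \<omega>) \<in> C}"

definition shift_invariant :: "((nat \<Rightarrow> real) set \<Rightarrow> real) \<Rightarrow> bool" where
  "shift_invariant \<nu> \<longleftrightarrow>
     (\<forall>C \<in> sets seq_space. \<nu> (shift -` C \<inter> space seq_space) = \<nu> C)"

end

theory Submission
  imports Defs
begin

inductive_set mcls :: "'a set set \<Rightarrow> 'a set set" for G :: "'a set set" where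
  base: "A \<in> G \<Longrightarrow> A \<in> mcls G"
| inc: "(\<And>n::nat. A n \<in> mcls G) \<Longrightarrow> incseq A \<Longrightarrow> (\<Union>n. A n) \<in> mcls G"
| dec: "(\<And>n::nat. A n \<in> mcls G) \<Longrightarrow> decseq A \<Longrightarrow> (\<Inter>n. A n) \<in> mcls G"

lemma mcls_compl:
  assumes G: "algebra \<Omega> G" and B: "B \<in> mcls G" shows "\<Omega> - B \<in> mcls G"
  using B
proof induction
  case (base A)
  interpret algebra \<Omega> G by fact
  show ?case using base by (intro mcls.base compl_sets)
next
  case (inc A)
  have e: "\<Omega> - (\<Union>n. A n) = (\<Inter>n. \<Omega> - A n)" by auto
  have d: "decseq (\<lambda>n. \<Omega> - A n)" using \<open>incseq A\<close> by (auto simp: incseq_def decseq_def)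
  show ?case unfolding e using inc.IH d by (rule mcls.dec)
next
  case (dec A)
  have e: "\<Omega> - (\<Inter>n. A n) = (\<Union>n. \<Omega> - A n)" by auto
  have d: "incseq (\<lambda>n. \<Omega> - A n)" using \<open>decseq A\<close> by (auto simp: incseq_def decseq_def)
  show ?case unfolding e using dec.IH d by (rule mcls.inc)
qed

lemma mcls_Int_G:
  assumes G: "algebra \<Omega> G" and B: "B \<in> G" and A: "A \<in> mcls G" shows "A \<inter> B \<in> mcls G"
  using A
proof induction
  case (base A)
  interpret algebra \<Omega> G by fact
  show ?case using base B by (intro mcls.base Int)
next
  case (inc A)
  have e: "(\<Union>n. A n) \<inter> B = (\<Union>n. A n \<inter> B)" by auto
  have d: "incseq (\<lambda>n. A n \<inter> B)" using \<open>incseq A\<close> by (auto simp: incseq_def)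
  show ?case unfolding e using inc.IH d by (rule mcls.inc)
next
  case (dec A)
  have e: "(\<Inter>n. A n) \<inter> B = (\<Inter>n. A n \<inter> B)" by auto
  have d: "decseq (\<lambda>n. A n \<inter> B)" using \<open>decseq A\<close> by (auto simp: decseq_def)
  show ?case unfolding e using dec.IH d by (rule mcls.dec)
qed

lemma mcls_Int:
  assumes G: "algebra \<Omega> G" and A: "A \<in> mcls G" and B: "B \<in> mcls G" shows "A \<inter> B \<in> mcls G"
  using B
proof induction
  case (base B) then show ?case using mcls_Int_G[OF G _ A] by simp
next
  case (inc B)
  have e: "A \<inter> (\<Union>n. B n) = (\<Union>n. A \<inter> B n)" by auto
  have d: "incseq (\<lambda>n. A \<inter> B n)" using \<open>incseq B\<close> by (auto simp: incseq_def)
  show ?case unfolding e using inc.IH d by (rule mcls.inc)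
next
  case (dec B)
  have e: "A \<inter> (\<Inter>n. B n) = (\<Inter>n. A \<inter> B n)" by auto
  have d: "decseq (\<lambda>n. A \<inter> B n)" using \<open>decseq B\<close> by (auto simp: decseq_def)
  show ?case unfolding e using dec.IH d by (rule mcls.dec)
qed

lemma mcls_Pow:
  assumes G: "algebra \<Omega> G" and A: "A \<in> mcls G" shows "A \<subseteq> \<Omega>"
proof -
  interpret algebra \<Omega> G by fact
  show ?thesis using A
  proof induction
    case (base A) then show ?case using sets_into_space by blast
  next
    case (inc A) then show ?case by blast
  next
    case (dec A) then show ?case by blast
  qed
qed

lemma mcls_sigma:
  assumes G: "algebra \<Omega> G" shows "sigma_algebra \<Omega> (mcls G)"
proof -
  interpret G: algebra \<Omega> G by fact
  have alg: "algebra \<Omega> (mcls G)"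
    unfolding algebra_iff_Int
  proof (intro conjI ballI)
    show "mcls G \<subseteq> Pow \<Omega>" using mcls_Pow[OF G] by blast
    show "{} \<in> mcls G" by (intro mcls.base G.empty_sets)
    show "\<Omega> - a \<in> mcls G" if "a \<in> mcls G" for a using mcls_compl[OF G that] .
    show "a \<inter> b \<in> mcls G" if "a \<in> mcls G" "b \<in> mcls G" for a b using mcls_Int[OF G that] .
  qed
  interpret A: algebra \<Omega> "mcls G" by (rule alg)
  show ?thesis unfolding sigma_algebra_iff
  proof (intro conjI alg allI impI)
    fix A :: "nat \<Rightarrow> _" assume r: "range A \<subseteq> mcls G"
    have fin: "(\<Union>i\<le>n. A i) \<in> mcls G" for n
      using A.finite_UN[of "{..n}" A] r by auto
    have e: "(\<Union>i. A i) = (\<Union>n. \<Union>i\<le>n. A i)" by auto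
    have d: "incseq (\<lambda>n. \<Union>i\<le>n. A i)" by (intro monoI UN_mono) auto
    show "(\<Union>i. A i) \<in> mcls G" unfolding e using fin d by (rule mcls.inc)
  qed
qed

lemma monotone_class:
  assumes G: "algebra \<Omega> G"
    and base: "\<And>C. C \<in> G \<Longrightarrow> P C"
    and inc: "\<And>A::nat \<Rightarrow> _. (\<And>n. A n \<in> sigma_sets \<Omega> G) \<Longrightarrow> (\<And>n. P (A n)) \<Longrightarrow> incseq A \<Longrightarrow> P (\<Union>n. A n)"
    and dec: "\<And>A::nat \<Rightarrow> _. (\<And>n. A n \<in> sigma_sets \<Omega> G) \<Longrightarrow> (\<And>n. P (A n)) \<Longrightarrow> decseq A \<Longrightarrow> P (\<Inter>n. A n)"
    and C: "C \<in> sigma_sets \<Omega> G"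
  shows "P C"
proof -
  interpret G: algebra \<Omega> G by fact
  interpret S: sigma_algebra \<Omega> "sigma_sets \<Omega> G"
    by (intro sigma_algebra_sigma_sets G.space_closed)
  have sub: "sigma_sets \<Omega> G \<subseteq> mcls G"
    by (rule sigma_algebra.sigma_sets_subset[OF mcls_sigma[OF G]]) (auto intro: mcls.base)
  have "D \<in> sigma_sets \<Omega> G \<and> P D" if "D \<in> mcls G" for D
    using that
  proof induction
    case (base A) then show ?case using assms(2) by (auto intro: sigma_sets.Basic)
  next
    case (inc A)
    then have "A n \<in> sigma_sets \<Omega> G" "P (A n)" for n by auto
    moreover have "(\<Union>n. A n) \<in> sigma_sets \<Omega> G" using calculation(1) by (intro S.countable_nat_UN) auto
    ultimately show ?case using assms(3)[of A] \<open>incseq A\<close> by blast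
  next
    case (dec A)
    then have "A n \<in> sigma_sets \<Omega> G" "P (A n)" for n by auto
    moreover have "(\<Inter>n. A n) \<in> sigma_sets \<Omega> G" using calculation(1) by (intro S.countable_INT) auto
    ultimately show ?case using assms(4)[of A] \<open>decseq A\<close> by blast
  qed
  then show ?thesis using C sub by blast
qed

lemma space_seq_space: "space seq_space = UNIV"
  by (auto simp: space_PiM PiE_def extensional_def)

lemma law_cont_inc:
  assumes cc: "continuous_capacity M \<mu>" and Z: "Z \<in> measurable M N"
    and A: "\<And>n::nat. A n \<in> sets N" and inc: "incseq A"
  shows "(\<lambda>n. \<mu> {\<omega> \<in> space M. Z \<omega> \<in> A n}) \<longlonglongrightarrow> \<mu> {\<omega> \<in> space M. Z \<omega> \<in> (\<Union>n. A n)}"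
proof -
  let ?S = "\<lambda>n. {\<omega> \<in> space M. Z \<omega> \<in> A n}"
  have r: "range ?S \<subseteq> sets M"
    using measurable_sets[OF Z A] by (auto simp: vimage_def Int_def conj_commute)
  have i: "incseq ?S" using inc by (auto simp: incseq_def)
  have e: "(\<Union>n. ?S n) = {\<omega> \<in> space M. Z \<omega> \<in> (\<Union>n. A n)}" by auto
  have H: "\<forall>A :: nat \<Rightarrow> 'a set. range A \<subseteq> sets M \<longrightarrow> incseq A \<longrightarrow>
         (\<lambda>n. \<mu> (A n)) \<longlonglongrightarrow> \<mu> (\<Union>n. A n)"
    using cc unfolding continuous_capacity_def by blast
  show ?thesis using H[rule_format, OF r i] unfolding e .
qed

lemma law_cont_dec:
  assumes cc: "continuous_capacity M \<mu>" and Z: "Z \<in> measurable M N"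
    and A: "\<And>n::nat. A n \<in> sets N" and dec: "decseq A"
  shows "(\<lambda>n. \<mu> {\<omega> \<in> space M. Z \<omega> \<in> A n}) \<longlonglongrightarrow> \<mu> {\<omega> \<in> space M. Z \<omega> \<in> (\<Inter>n. A n)}"
proof -
  let ?S = "\<lambda>n. {\<omega> \<in> space M. Z \<omega> \<in> A n}"
  have r: "range ?S \<subseteq> sets M"
    using measurable_sets[OF Z A] by (auto simp: vimage_def Int_def conj_commute)
  have i: "decseq ?S" using dec by (auto simp: decseq_def)
  have e: "(\<Inter>n. ?S n) = {\<omega> \<in> space M. Z \<omega> \<in> (\<Inter>n. A n)}" by auto
  have H: "\<forall>A :: nat \<Rightarrow> 'a set. range A \<subseteq> sets M \<longrightarrow> decseq A \<longrightarrow>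
         (\<lambda>n. \<mu> (A n)) \<longlonglongrightarrow> \<mu> (\<Inter>n. A n)"
    using cc unfolding continuous_capacity_def by blast
  show ?thesis using H[rule_format, OF r i] unfolding e .
qed

definition cylG :: "(nat \<Rightarrow> real) set set" where
  "cylG = {prod_emb UNIV (\<lambda>_. borel) {..k} X | k X. X \<in> sets (PiM {..k} (\<lambda>_::nat. borel::real measure))}"

lemma cylG_sets: "cylG \<subseteq> sets seq_space"
  unfolding cylG_def by (auto intro!: measurable_prod_emb)

lemma algebra_cylG: "algebra UNIV cylG"
  unfolding algebra_iff_Int
proof (intro conjI ballI)
  show "cylG \<subseteq> Pow UNIV" by simp
  have "prod_emb UNIV (\<lambda>_. borel) {..0} {} = (({}) :: (nat \<Rightarrow> real) set)" by (simp add: prod_emb_def)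
  then show "{} \<in> cylG" unfolding cylG_def by (metis (mono_tags, lifting) mem_Collect_eq sets.empty_sets)
next
  fix a assume "a \<in> cylG"
  then obtain k X where a: "a = prod_emb UNIV (\<lambda>_. borel) {..k} X"
    and X: "X \<in> sets (PiM {..k} (\<lambda>_::nat. borel::real measure))" unfolding cylG_def by blast
  have "UNIV - a = prod_emb UNIV (\<lambda>_. borel) {..k} (space (PiM {..k} (\<lambda>_::nat. borel::real measure)) - X)"
    unfolding a by (auto simp: prod_emb_def space_PiM PiE_def extensional_def)
  then show "UNIV - a \<in> cylG" unfolding cylG_def using X by blast
next
  fix a b assume "a \<in> cylG" "b \<in> cylG"
  then obtain k X l Z where a: "a = prod_emb UNIV (\<lambda>_. borel) {..k} X"
    and X: "X \<in> sets (PiM {..k} (\<lambda>_::nat. borel::real measure))"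
    and b: "b = prod_emb UNIV (\<lambda>_. borel) {..l} Z"
    and Z: "Z \<in> sets (PiM {..l} (\<lambda>_::nat. borel::real measure))" unfolding cylG_def by blast
  let ?m = "max k l"
  have "a \<inter> b = prod_emb UNIV (\<lambda>_. borel) {..?m}
     (prod_emb {..?m} (\<lambda>_. borel) {..k} X \<inter> prod_emb {..?m} (\<lambda>_. borel) {..l} Z)"
    unfolding a b prod_emb_Int by (subst (1 2) prod_emb_trans) auto
  moreover have "prod_emb {..?m} (\<lambda>_. borel) {..k} X \<inter> prod_emb {..?m} (\<lambda>_. borel) {..l} Z
      \<in> sets (PiM {..?m} (\<lambda>_::nat. borel::real measure))"
    using X Z by (intro sets.Int measurable_prod_emb) auto
  ultimately show "a \<inter> b \<in> cylG" unfolding cylG_def by blast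
qed

lemma seq_space_sigma: "sets seq_space \<subseteq> sigma_sets UNIV cylG"
proof -
  have "sets seq_space = sigma_sets UNIV {{f\<in>\<Pi>\<^sub>E i\<in>UNIV. space (borel::real measure). f i \<in> A} | i A. A \<in> sets (borel::real measure)}"
    using sets_PiM_single[of UNIV "\<lambda>_::nat. borel::real measure"] space_seq_space by (simp add: space_PiM)
  also have "\<dots> \<subseteq> sigma_sets UNIV cylG"
  proof (rule sigma_sets_mono', safe)
    fix i :: nat and A :: "real set" assume A: "A \<in> sets borel"
    have "{f\<in>\<Pi>\<^sub>E i\<in>UNIV. space (borel::real measure). f i \<in> A} =
       prod_emb UNIV (\<lambda>_. borel) {..i} ((\<lambda>x. x i) -` A \<inter> space (PiM {..i} (\<lambda>_::nat. borel::real measure)))"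
      by (auto simp: prod_emb_def space_PiM PiE_def extensional_def)
    moreover have "(\<lambda>x. x i) -` A \<inter> space (PiM {..i} (\<lambda>_::nat. borel::real measure)) \<in> sets (PiM {..i} (\<lambda>_::nat. borel::real measure))"
      by (rule measurable_sets[OF measurable_component_singleton[of i "{..i}" "\<lambda>_. borel"] A]) simp
    ultimately show "{f\<in>\<Pi>\<^sub>E i\<in>UNIV. space (borel::real measure). f i \<in> A} \<in> cylG"
      unfolding cylG_def by blast
  qed
  finally show ?thesis .
qed

lemma sigma_cylG: "sigma_sets UNIV cylG \<subseteq> sets seq_space"
  using sets.sigma_sets_subset[OF cylG_sets] space_seq_space by simp

theorem proposition7:
  fixes M :: "'a measure" and \<mu> :: "'a set \<Rightarrow> real" and Y :: "nat \<Rightarrow> 'a \<Rightarrow> real"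
  assumes "continuous_capacity M \<mu>"
    and "real_process M Y"
  shows "stationary M \<mu> Y \<longleftrightarrow> shift_invariant (law_cap M \<mu> Y)"
proof
  assume st: "stationary M \<mu> Y"
  let ?Yv = "\<lambda>\<omega> i. Y i \<omega>" and ?Ys = "\<lambda>\<omega> i. Y (Suc i) \<omega>"
  have mY: "?Yv \<in> measurable M seq_space"
    using assms(2) by (intro measurable_PiM_single') (auto simp: real_process_def)
  have mS: "?Ys \<in> measurable M seq_space"
    using assms(2) by (intro measurable_PiM_single') (auto simp: real_process_def)
  have eq1: "law_cap M \<mu> Y C = \<mu> {\<omega> \<in> space M. ?Yv \<omega> \<in> C}" for C
    by (simp add: law_cap_def)
  have eq2: "law_cap M \<mu> Y (shift -` C \<inter> space seq_space) = \<mu> {\<omega> \<in> space M. ?Ys \<omega> \<in> C}" for C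
    by (simp add: law_cap_def space_seq_space shift_def)
  let ?P = "\<lambda>C. \<mu> {\<omega> \<in> space M. ?Ys \<omega> \<in> C} = \<mu> {\<omega> \<in> space M. ?Yv \<omega> \<in> C}"
  have "?P C" if C: "C \<in> sets seq_space" for C
  proof (rule monotone_class[OF algebra_cylG])
    show "C \<in> sigma_sets UNIV cylG" using C seq_space_sigma by blast
  next
    fix D assume "D \<in> cylG"
    then obtain k X where D: "D = prod_emb UNIV (\<lambda>_. borel) {..k} X"
      and X: "X \<in> sets (PiM {..k} (\<lambda>_::nat. borel::real measure))" unfolding cylG_def by blast
    have "\<mu> {\<omega> \<in> space M. (\<lambda>i\<in>{..k}. Y (0 + i) \<omega>) \<in> X} =
          \<mu> {\<omega> \<in> space M. (\<lambda>i\<in>{..k}. Y (0 + 1 + i) \<omega>) \<in> X}"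
      using st X unfolding stationary_def by blast
    moreover have "{\<omega> \<in> space M. ?Yv \<omega> \<in> D} = {\<omega> \<in> space M. (\<lambda>i\<in>{..k}. Y (0 + i) \<omega>) \<in> X}"
      unfolding D by (auto simp: prod_emb_def restrict_def PiE_def extensional_def)
    moreover have "{\<omega> \<in> space M. ?Ys \<omega> \<in> D} = {\<omega> \<in> space M. (\<lambda>i\<in>{..k}. Y (0 + 1 + i) \<omega>) \<in> X}"
      unfolding D by (auto simp: prod_emb_def restrict_def PiE_def extensional_def)
    ultimately show "?P D" by simp
  next
    fix A :: "nat \<Rightarrow> _" assume A: "\<And>n. A n \<in> sigma_sets UNIV cylG" and P: "\<And>n. ?P (A n)"
      and inc: "incseq A"
    have As: "A n \<in> sets seq_space" for n using A sigma_cylG by blast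
    have ef: "(\<lambda>n. \<mu> {\<omega> \<in> space M. ?Ys \<omega> \<in> A n}) = (\<lambda>n. \<mu> {\<omega> \<in> space M. ?Yv \<omega> \<in> A n})"
      using P by simp
    show "?P (\<Union>n. A n)"
      by (rule LIMSEQ_unique[OF law_cont_inc[OF assms(1) mS As inc, unfolded ef] law_cont_inc[OF assms(1) mY As inc]])
  next
    fix A :: "nat \<Rightarrow> _" assume A: "\<And>n. A n \<in> sigma_sets UNIV cylG" and P: "\<And>n. ?P (A n)"
      and dec: "decseq A"
    have As: "A n \<in> sets seq_space" for n using A sigma_cylG by blast
    have ef: "(\<lambda>n. \<mu> {\<omega> \<in> space M. ?Ys \<omega> \<in> A n}) = (\<lambda>n. \<mu> {\<omega> \<in> space M. ?Yv \<omega> \<in> A n})"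
      using P by simp
    show "?P (\<Inter>n. A n)"
      by (rule LIMSEQ_unique[OF law_cont_dec[OF assms(1) mS As dec, unfolded ef] law_cont_dec[OF assms(1) mY As dec]])
  qed
  then show "shift_invariant (law_cap M \<mu> Y)"
    unfolding shift_invariant_def using eq1 eq2 by simp
next
  assume si: "shift_invariant (law_cap M \<mu> Y)"
  show "stationary M \<mu> Y"
    unfolding stationary_def
  proof (intro allI ballI)
    fix n k and A assume A: "A \<in> sets (PiM {..k} (\<lambda>_::nat. borel::real measure))"
    let ?f = "\<lambda>x::nat \<Rightarrow> real. \<lambda>i\<in>{..k}. x (n + i)"
    have mf: "?f \<in> measurable seq_space (PiM {..k} (\<lambda>_. borel))"
      by (intro measurable_restrict measurable_component_singleton) auto
    define C where "C = ?f -` A \<inter> space seq_space"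
    have C: "C \<in> sets seq_space" unfolding C_def by (rule measurable_sets[OF mf A])
    have "law_cap M \<mu> Y (shift -` C \<inter> space seq_space) = law_cap M \<mu> Y C"
      using si C unfolding shift_invariant_def by blast
    moreover have "law_cap M \<mu> Y C = \<mu> {\<omega> \<in> space M. (\<lambda>i\<in>{..k}. Y (n + i) \<omega>) \<in> A}"
      by (simp add: law_cap_def C_def space_seq_space)
    moreover have "law_cap M \<mu> Y (shift -` C \<inter> space seq_space) =
        \<mu> {\<omega> \<in> space M. (\<lambda>i\<in>{..k}. Y (n + 1 + i) \<omega>) \<in> A}"
      by (simp add: law_cap_def C_def space_seq_space shift_def)
    ultimately show "\<mu> {\<omega> \<in> space M. (\<lambda>i\<in>{..k}. Y (n + i) \<omega>) \<in> A} =
        \<mu> {\<omega> \<in> space M. (\<lambda>i\<in>{..k}. Y (n + 1 + i) \<omega>) \<in> A}" by simp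
  qed
qed

end
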